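(* Let $n$ be a positive integer and $z$ a real number with $0<|z|\le1/\alpha$. Then \[ \sqrt5\sum_{k=1}^\infty\frac{F_{2k}\zeta(2k)z^{2k}}{k(2k-1+2n)} = \frac{1}{2n-1}\ln\left(-\alpha^2\frac{\sin(\pi\beta z)}{\sin(\pi\alpha z)}\right) -(2n-2)!\sum_{j=1}^n(-1)^j\frac{(2n+1-2j)\operatorname{Cl}_{2j}(2\pi\alpha z)-2\pi\alpha z\operatorname{Cl}_{2j-1}(2\pi\alpha z)}{(2n+1-2j)!\,(2\pi\alpha z)^{2j-1}} +(2n-2)!\sum_{j=1}^n(-1)^j\frac{(2n+1-2j)\operatorname{Cl}_{2j}(2\pi\beta z)-2\pi\beta z\operatorname{Cl}_{2j-1}(2\pi\beta z)}{(2n+1-2j)!\,(2\pi\beta z)^{2j-1}}, \] \[ \sum_{k=1}^\infty\frac{L_{2k}\zeta(2k)z^{2k}}{k(2k-1+2n)} = -\frac{2}{(2n-1)^2}+\frac{1}{2n-1}\ln\left(-\frac{\pi^2z^2}{\sin(\pi\alpha z)\sin(\pi\beta z)}\right) -(2n-2)!\sum_{j=1}^n(-1)^j\frac{(2n+1-2j)\operatorname{Cl}_{2j}(2\pi\alpha z)-2\pi\alpha z\operatorname{Cl}_{2j-1}(2\pi\alpha z)}{(2n+1-2j)!\,(2\pi\alpha z)^{2j-1}} -(2n-2)!\sum_{j=1}^n(-1)^j\frac{(2n+1-2j)\operatorname{Cl}_{2j}(2\pi\beta z)-2\pi\beta z\operatorname{Cl}_{2j-1}(2\pi\beta z)}{(2n+1-2j)!\,(2\pi\beta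 z)^{2j-1}}. \]
   Context: $F_n$, $L_n$ are the Fibonacci and Lucas numbers ($F_0=0,F_1=1$, $L_0=2,L_1=1$, $w_n=w_{n-1}+w_{n-2}$); $\alpha=(1+\sqrt5)/2$, $\beta=(1-\sqrt5)/2$. $\zeta$ is the Riemann zeta function. Clausen functions: $\operatorname{Cl}_1(x)=-\ln(2\sin(x/2))$ and for $n\ge2$, $\operatorname{Cl}_n(x)=\sum_{k\ge1}\sin(kx)/k^n$ if $n$ is even, $\operatorname{Cl}_n(x)=\sum_{k\ge1}\cos(kx)/k^n$ if $n$ is odd. *)

theory Defs
  imports "HOL-Analysis.Analysis" "HOL-Number_Theory.Fib"
begin

fun lucas :: "nat \<Rightarrow> nat" where
  "lucas 0 = 2"
| "lucas (Suc 0) = 1"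
| "lucas (Suc (Suc n)) = lucas (Suc n) + lucas n"

definition gr_alpha :: real where "gr_alpha = (1 + sqrt 5) / 2"
definition gr_beta :: real where "gr_beta = (1 - sqrt 5) / 2"

text \<open>Riemann zeta function on the reals s > 1 (only used at even integers s = 2k >= 2).\<close>
definition rzeta :: "real \<Rightarrow> real" where
  "rzeta s = (\<Sum>m. 1 / real (Suc m) powr s)"

text \<open>Clausen functions. Cl_1 x = - ln (2 sin(x/2)), extended evenly (it is the
  sum of cos(kx)/k), i.e. - ln |2 sin (x/2)|; for n >= 2 the sine/cosine series.\<close>
definition clausen :: "nat \<Rightarrow> real \<Rightarrow> real" where
  "clausen n x =
     (if n = 1 then - ln \<bar>2 * sin (x / 2)\<bar>
      else if even n then (\<Sum>k. sin (real (Suc k) * x) / real (Suc k) ^ n)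
      else (\<Sum>k. cos (real (Suc k) * x) / real (Suc k) ^ n))"

definition clsum :: "nat \<Rightarrow> real \<Rightarrow> real" where
  "clsum n x = (\<Sum>j=1..n. (-1) ^ j *
      ((real (2*n+1-2*j)) * clausen (2*j) x - x * clausen (2*j-1) x)
      / (fact (2*n+1-2*j) * x ^ (2*j-1)))"

definition fterm :: "nat \<Rightarrow> real \<Rightarrow> nat \<Rightarrow> real" where
  "fterm n z k = real (fib (2*k)) * rzeta (real (2*k)) * z ^ (2*k)
                  / (real k * real (2*k - 1 + 2*n))"

definition lterm :: "nat \<Rightarrow> real \<Rightarrow> nat \<Rightarrow> real" where
  "lterm n z k = real (lucas (2*k)) * rzeta (real (2*k)) * z ^ (2*k)
                  / (real k * real (2*k - 1 + 2*n))"

definition RHS_F :: "nat \<Rightarrow> real \<Rightarrow> real" where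
  "RHS_F n z =
     1 / (2 * real n - 1) *
       ln (- (gr_alpha ^ 2) * sin (pi * gr_beta * z) / sin (pi * gr_alpha * z))
     - fact (2*n-2) * clsum n (2 * pi * gr_alpha * z)
     + fact (2*n-2) * clsum n (2 * pi * gr_beta * z)"

definition RHS_L :: "nat \<Rightarrow> real \<Rightarrow> real" where
  "RHS_L n z =
     - 2 / (2 * real n - 1) ^ 2
     + 1 / (2 * real n - 1) *
       ln (- (pi ^ 2 * z ^ 2) / (sin (pi * gr_alpha * z) * sin (pi * gr_beta * z)))
     - fact (2*n-2) * clsum n (2 * pi * gr_alpha * z)
     - fact (2*n-2) * clsum n (2 * pi * gr_beta * z)"

end

theory Submission
  imports Defs "HOL-Real_Asymp.Real_Asymp"
begin

lemma summ_inv_pow: "k \<ge> 2 \<Longrightarrow> summable (\<lambda>i. 1 / real (Suc i) ^ k)"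
proof -
  assume "k \<ge> 2"
  from inverse_power_summable[OF this, where 'a=real] have "summable (\<lambda>n. inverse (real n ^ k))" .
  hence "summable (\<lambda>n. inverse (real (Suc n) ^ k))" by (subst summable_Suc_iff)
  thus ?thesis by (simp add: inverse_eq_divide)
qed

lemma inv_pow_le2: "k \<ge> 2 \<Longrightarrow> 1 / real (Suc i) ^ k \<le> 1 / real (Suc i) ^ 2"
  by (intro divide_left_mono power_increasing) auto

lemma cl_sin_bound: "k \<ge> 2 \<Longrightarrow> norm (sin (real (Suc i) * x) / real (Suc i) ^ k) \<le> 1 / real (Suc i) ^ 2"
proof -
  assume k: "k \<ge> 2"
  have "norm (sin (real (Suc i) * x) / real (Suc i) ^ k) \<le> 1 / real (Suc i) ^ k"
    by (simp add: abs_sin_le_one divide_right_mono del: of_nat_Suc)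
  also have "\<dots> \<le> 1 / real (Suc i) ^ 2" using inv_pow_le2[OF k] .
  finally show ?thesis .
qed

lemma cl_cos_bound: "k \<ge> 2 \<Longrightarrow> norm (cos (real (Suc i) * x) / real (Suc i) ^ k) \<le> 1 / real (Suc i) ^ 2"
proof -
  assume k: "k \<ge> 2"
  have "norm (cos (real (Suc i) * x) / real (Suc i) ^ k) \<le> 1 / real (Suc i) ^ k"
    by (simp add: abs_cos_le_one divide_right_mono del: of_nat_Suc)
  also have "\<dots> \<le> 1 / real (Suc i) ^ 2" using inv_pow_le2[OF k] .
  finally show ?thesis .
qed

lemma clausen_even: "even k \<Longrightarrow> k \<ge> 2 \<Longrightarrow> clausen k x = (\<Sum>i. sin (real (Suc i) * x) / real (Suc i) ^ k)"
  by (auto simp: clausen_def)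

lemma clausen_odd: "odd k \<Longrightarrow> k \<ge> 2 \<Longrightarrow> clausen k x = (\<Sum>i. cos (real (Suc i) * x) / real (Suc i) ^ k)"
  by (auto simp: clausen_def)

lemma clausen_cont: assumes "k \<ge> 2" shows "continuous_on UNIV (clausen k)"
proof (cases "even k")
  case True
  have ul: "uniform_limit UNIV (\<lambda>n x. \<Sum>i<n. sin (real (Suc i) * x) / real (Suc i) ^ k)
          (\<lambda>x. \<Sum>i. sin (real (Suc i) * x) / real (Suc i) ^ k) sequentially"
    by (rule Weierstrass_m_test[OF cl_sin_bound[OF assms] summ_inv_pow]) simp
  have "continuous_on UNIV (\<lambda>x. \<Sum>i. sin (real (Suc i) * x) / real (Suc i) ^ k)"
    by (rule uniform_limit_theorem[OF _ ul trivial_limit_sequentially]) (auto intro!: always_eventually continuous_intros)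
  thus ?thesis using clausen_even[OF True assms] by (simp add: fun_eq_iff)
next
  case False
  have ul: "uniform_limit UNIV (\<lambda>n x. \<Sum>i<n. cos (real (Suc i) * x) / real (Suc i) ^ k)
          (\<lambda>x. \<Sum>i. cos (real (Suc i) * x) / real (Suc i) ^ k) sequentially"
    by (rule Weierstrass_m_test[OF cl_cos_bound[OF assms] summ_inv_pow]) simp
  have "continuous_on UNIV (\<lambda>x. \<Sum>i. cos (real (Suc i) * x) / real (Suc i) ^ k)"
    by (rule uniform_limit_theorem[OF _ ul trivial_limit_sequentially]) (auto intro!: always_eventually continuous_intros)
  thus ?thesis using clausen_odd[OF False assms] by (simp add: fun_eq_iff)
qed

lemma clausen_even_0: "even k \<Longrightarrow> k \<ge> 2 \<Longrightarrow> clausen k 0 = 0"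
  by (simp add: clausen_even)

lemma clausen_deriv_even:
  assumes "j \<ge> 2"
  shows "(clausen (2*j) has_real_derivative clausen (2*j-1) x) (at x)"
proof -
  have k: "2*j-1 \<ge> 2" using assms by auto
  have d: "\<And>i x. ((\<lambda>x. sin (real (Suc i) * x) / real (Suc i) ^ (2*j)) has_real_derivative
             cos (real (Suc i) * x) / real (Suc i) ^ (2*j-1)) (at x within UNIV)"
  proof -
    fix i :: nat and x :: real
    have e: "real (Suc i) ^ (2*j) = real (Suc i) * real (Suc i) ^ (2*j-1)"
      using assms by (subst power_Suc[symmetric]) (simp add: Suc_diff_le)
    have "((\<lambda>x. sin (real (Suc i) * x)) has_real_derivative cos (real (Suc i) * x) * real (Suc i)) (at x)"
      by (rule derivative_eq_intros refl)+ simp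
    from DERIV_cdivide[OF this, of "real (Suc i) ^ (2*j)"]
    show "?thesis i x" by (simp add: e del: of_nat_Suc)
  qed
  have "((\<lambda>x. \<Sum>i. sin (real (Suc i) * x) / real (Suc i) ^ (2*j)) has_real_derivative
          (\<Sum>i. cos (real (Suc i) * x) / real (Suc i) ^ (2*j-1))) (at x)"
    by (rule has_field_derivative_series'(2)[OF convex_UNIV d Weierstrass_m_test'[OF cl_cos_bound[OF k] summ_inv_pow], of 0])
       (auto simp: )
  moreover have "clausen (2*j) = (\<lambda>x. \<Sum>i. sin (real (Suc i) * x) / real (Suc i) ^ (2*j))"
    using assms by (intro ext clausen_even) auto
  moreover have "clausen (2*j-1) x = (\<Sum>i. cos (real (Suc i) * x) / real (Suc i) ^ (2*j-1))"
    using assms k by (intro clausen_odd) auto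
  ultimately show ?thesis by simp
qed

lemma clausen_deriv_odd:
  assumes "j \<ge> 1"
  shows "(clausen (2*j+1) has_real_derivative - clausen (2*j) x) (at x)"
proof -
  have k: "2*j \<ge> 2" using assms by auto
  have d: "\<And>i x. ((\<lambda>x. cos (real (Suc i) * x) / real (Suc i) ^ (2*j+1)) has_real_derivative
             - (sin (real (Suc i) * x) / real (Suc i) ^ (2*j))) (at x within UNIV)"
  proof -
    fix i :: nat and x :: real
    have "((\<lambda>x. cos (real (Suc i) * x)) has_real_derivative - sin (real (Suc i) * x) * real (Suc i)) (at x)"
      by (rule derivative_eq_intros refl)+ simp
    from DERIV_cdivide[OF this, of "real (Suc i) ^ (2*j+1)"]
    show "?thesis i x" by (simp del: of_nat_Suc)
  qed
  have "((\<lambda>x. \<Sum>i. cos (real (Suc i) * x) / real (Suc i) ^ (2*j+1)) has_real_derivative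
          (\<Sum>i. - (sin (real (Suc i) * x) / real (Suc i) ^ (2*j)))) (at x)"
  proof -
    have uc: "uniformly_convergent_on UNIV (\<lambda>n x. \<Sum>i<n. - (sin (real (Suc i) * x) / real (Suc i) ^ (2*j)))"
      by (rule Weierstrass_m_test'[where M="\<lambda>i. 1 / real (Suc i) ^ 2"]) (use cl_sin_bound[OF k] summ_inv_pow[of "2::nat"] in auto)
    show ?thesis
      by (rule has_field_derivative_series'(2)[OF convex_UNIV d uc, of 0]) (use summ_inv_pow[of "2*j+1"] assms in auto)
  qed
  moreover have "clausen (2*j+1) = (\<lambda>x. \<Sum>i. cos (real (Suc i) * x) / real (Suc i) ^ (2*j+1))"
    using assms by (intro ext clausen_odd) auto
  moreover have "clausen (2*j) x = (\<Sum>i. sin (real (Suc i) * x) / real (Suc i) ^ (2*j))"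
    using assms k by (intro clausen_even) auto
  moreover have "(\<Sum>i. - (sin (real (Suc i) * x) / real (Suc i) ^ (2*j))) = - (\<Sum>i. sin (real (Suc i) * x) / real (Suc i) ^ (2*j))"
  proof -
    have "summable (\<lambda>i. sin (real (Suc i) * x) / real (Suc i) ^ (2*j))"
      by (rule summable_comparison_test'[OF summ_inv_pow[of "2::nat"]]) (use cl_sin_bound[OF k] in auto)
    thus ?thesis by (rule suminf_minus)
  qed
  ultimately show ?thesis by simp
qed

lemma cos_series:
  fixes r x :: real
  assumes r: "0 \<le> r" "r < 1"
  shows "(\<lambda>k. r^(Suc k) / real (Suc k) * cos (real (Suc k) * x)) sums (- ln (1 - 2*r*cos x + r^2) / 2)"
proof -
  define w where "w = complex_of_real r * cis x"
  have nw: "norm w = r" using r by (simp add: w_def norm_mult)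
  have "norm (-w) < 1" using nw r by simp
  from Ln_series'[OF this] have "(\<lambda>n. - (w^n) / of_nat n) sums ln (1 - w)" by simp
  from bounded_linear.sums[OF bounded_linear_Re this]
  have s: "(\<lambda>n. Re (- (w^n) / of_nat n)) sums Re (ln (1 - w))" .
  have wn: "Re (- (w^n) / of_nat n) = - (r^n / real n * cos (real n * x))" for n
    by (simp add: w_def power_mult_distrib Complex.DeMoivre Re_divide_of_nat)
  have ne: "1 - w \<noteq> 0" using nw r by (metis norm_one order_less_irrefl right_minus_eq)
  have "Re (ln (1 - w)) = ln (norm (1 - w))" using ne by simp
  also have "norm (1 - w) = sqrt (1 - 2*r*cos x + r^2)"
  proof -
    have "(norm (1 - w))^2 = (1 - r * cos x)^2 + (r * sin x)^2"
      by (simp add: cmod_power2 w_def cis.sel)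
    also have "\<dots> = 1 - 2*r*cos x + r^2"
      by (simp add: power2_eq_square algebra_simps) (metis sin_cos_squared_add2 mult.assoc distrib_left mult.right_neutral power2_eq_square)
    finally show ?thesis by (metis norm_ge_zero real_sqrt_unique)
  qed
  also have "1 - 2*r*cos x + r^2 > 0"
  proof -
    have "(norm (1 - w))^2 > 0" using ne by simp
    also have "(norm (1 - w))^2 = (1 - r * cos x)^2 + (r * sin x)^2"
      by (simp add: cmod_power2 w_def cis.sel)
    also have "\<dots> = 1 - 2*r*cos x + r^2"
      by (simp add: power2_eq_square algebra_simps) (metis sin_cos_squared_add2 mult.assoc distrib_left mult.right_neutral power2_eq_square)
    finally show ?thesis .
  qed
  hence "ln (sqrt (1 - 2*r*cos x + r^2)) = ln (1 - 2*r*cos x + r^2) / 2"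
    by (simp add: ln_sqrt)
  finally have eq: "Re (ln (1 - w)) = ln (1 - 2*r*cos x + r^2) / 2" .
  have "(\<lambda>n. Re (- (w^n) / of_nat n)) = (\<lambda>n. - (r^n / real n * cos (real n * x)))"
    using wn by (intro ext) metis
  with s eq have "(\<lambda>n. - (r^n / real n * cos (real n * x))) sums (ln (1 - 2*r*cos x + r^2) / 2)"
    by simp
  from sums_minus[OF this] have "(\<lambda>n. r^n / real n * cos (real n * x)) sums (- ln (1 - 2*r*cos x + r^2) / 2)"
    by simp
  thus ?thesis by (subst sums_Suc_iff) simp
qed

definition Cr :: "real \<Rightarrow> real \<Rightarrow> real" where
  "Cr r x = (\<Sum>k. r^(Suc k) / real (Suc k)^2 * sin (real (Suc k) * x))"

lemma Cr_deriv:
  assumes r: "0 \<le> r" "r < 1"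
  shows "(Cr r has_real_derivative (- ln (1 - 2*r*cos x + r^2) / 2)) (at x)"
proof -
  have d: "\<And>k x. ((\<lambda>x. r^(Suc k) / real (Suc k)^2 * sin (real (Suc k) * x)) has_real_derivative
             r^(Suc k) / real (Suc k) * cos (real (Suc k) * x)) (at x within UNIV)"
  proof -
    fix k :: nat and x :: real
    have "((\<lambda>x. r^(Suc k) / real (Suc k)^2 * sin (real (Suc k) * x)) has_real_derivative
             r^(Suc k) / real (Suc k)^2 * (cos (real (Suc k) * x) * real (Suc k))) (at x)"
      by (rule derivative_eq_intros refl)+ simp
    thus "?thesis k x" by (simp add: power2_eq_square mult.assoc del: of_nat_Suc)
  qed
  have uc: "uniformly_convergent_on UNIV (\<lambda>n x. \<Sum>k<n. r^(Suc k) / real (Suc k) * cos (real (Suc k) * x))"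
  proof (rule Weierstrass_m_test'[where M="\<lambda>k. r^(Suc k)"])
    fix k :: nat and x :: real
    have "norm (r^(Suc k) / real (Suc k) * cos (real (Suc k) * x)) = r^(Suc k) / real (Suc k) * \<bar>cos (real (Suc k) * x)\<bar>"
      using r by (simp add: abs_mult)
    also have "\<dots> \<le> r^(Suc k) / 1 * 1"
      using r by (intro mult_mono divide_left_mono) (auto simp: abs_cos_le_one)
    finally show "norm (r^(Suc k) / real (Suc k) * cos (real (Suc k) * x)) \<le> r^(Suc k)" by simp
  next
    show "summable (\<lambda>k. r^(Suc k))" using r by (simp add: summable_geometric)
  qed
  have "((\<lambda>x. \<Sum>k. r^(Suc k) / real (Suc k)^2 * sin (real (Suc k) * x)) has_real_derivative
         (\<Sum>k. r^(Suc k) / real (Suc k) * cos (real (Suc k) * x))) (at x)"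
    by (rule has_field_derivative_series'(2)[OF convex_UNIV d uc, of 0]) auto
  moreover have "(\<Sum>k. r^(Suc k) / real (Suc k) * cos (real (Suc k) * x)) = - ln (1 - 2*r*cos x + r^2) / 2"
    using cos_series[OF r] by (simp add: sums_iff)
  ultimately show ?thesis by (simp add: Cr_def[abs_def])
qed

lemma Cr_lim:
  "(\<lambda>N. Cr (1 - 1 / real (N+2)) x) \<longlonglongrightarrow> clausen 2 x"
proof -
  have ul: "uniform_limit {0..1} (\<lambda>n r. \<Sum>k<n. r^(Suc k) / real (Suc k)^2 * sin (real (Suc k) * x))
          (\<lambda>r. \<Sum>k. r^(Suc k) / real (Suc k)^2 * sin (real (Suc k) * x)) sequentially"
  proof (rule Weierstrass_m_test[where M="\<lambda>k. 1 / real (Suc k)^2"])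
    fix k :: nat and r :: real assume "r \<in> {0..1}"
    hence r: "0 \<le> r" "r \<le> 1" by auto
    have "norm (r^(Suc k) / real (Suc k)^2 * sin (real (Suc k) * x)) = r^(Suc k) / real (Suc k)^2 * \<bar>sin (real (Suc k) * x)\<bar>"
      using r by (simp add: abs_mult)
    also have "\<dots> \<le> 1 / real (Suc k)^2 * 1"
      using r power_le_one[of r "Suc k"] by (intro mult_mono divide_right_mono) (auto simp: abs_sin_le_one simp del: power_Suc)
    finally show "norm (r^(Suc k) / real (Suc k)^2 * sin (real (Suc k) * x)) \<le> 1 / real (Suc k)^2" by simp
  qed (rule summ_inv_pow, simp)
  have cont: "continuous_on {0..1} (\<lambda>r. Cr r x)"
    unfolding Cr_def
    by (rule uniform_limit_theorem[OF _ ul trivial_limit_sequentially]) (auto intro!: always_eventually continuous_intros)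
  have lim: "(\<lambda>N. 1 - 1 / real (N+2)) \<longlonglongrightarrow> 1" by real_asymp
  have ev: "\<forall>\<^sub>F N in sequentially. 1 - 1 / real (N+2) \<in> {0..1}" by (auto intro!: always_eventually)
  from continuous_on_tendsto_compose[OF cont lim _ ev]
  have "(\<lambda>N. Cr (1 - 1 / real (N+2)) x) \<longlonglongrightarrow> Cr 1 x" by simp
  moreover have "Cr 1 x = clausen 2 x" by (simp add: Cr_def clausen_even)
  ultimately show ?thesis by simp
qed

lemma ln_diff_bound:
  fixes a b m :: real
  assumes "m > 0" "a \<ge> m" "b \<ge> m"
  shows "\<bar>ln a - ln b\<bar> \<le> \<bar>a - b\<bar> / m"
proof -
  have a: "a > 0" and b: "b > 0" using assms by auto
  have 1: "ln a - ln b \<le> (a - b) / b"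
    using ln_le_minus_one[of "a/b"] a b by (simp add: ln_div diff_divide_distrib)
  have 2: "ln b - ln a \<le> (b - a) / a"
    using ln_le_minus_one[of "b/a"] a b by (simp add: ln_div diff_divide_distrib)
  have 3: "(a - b) / b \<le> \<bar>a - b\<bar> / m"
  proof -
    have "(a - b) / b \<le> \<bar>a - b\<bar> / b" using b by (intro divide_right_mono) auto
    also have "\<dots> \<le> \<bar>a - b\<bar> / m" using assms by (intro divide_left_mono) auto
    finally show ?thesis .
  qed
  have 4: "(b - a) / a \<le> \<bar>a - b\<bar> / m"
  proof -
    have "(b - a) / a \<le> \<bar>a - b\<bar> / a" using a by (intro divide_right_mono) auto
    also have "\<dots> \<le> \<bar>a - b\<bar> / m" using assms by (intro divide_left_mono) auto
    finally show ?thesis .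
  qed
  show ?thesis using 1 2 3 4 by linarith
qed

lemma cos_le_cos_delta:
  assumes "0 < d" "d \<le> pi" "d \<le> x" "x \<le> 2*pi - d"
  shows "cos x \<le> cos d"
proof (cases "x \<le> pi")
  case True thus ?thesis using assms by (intro cos_monotone_0_pi_le) auto
next
  case False
  have "cos x = cos (2*pi - x)" by (simp add: cos_diff)
  also have "\<dots> \<le> cos d" using assms False by (intro cos_monotone_0_pi_le) auto
  finally show ?thesis .
qed

lemma Cl2_deriv_aux:
  assumes d: "0 < d" "d < pi" and x: "d < x" "x < 2*pi - d"
  shows "(clausen 2 has_real_derivative (- ln (2 - 2*cos x) / 2)) (at x)"
proof -
  define S where "S = {d..2*pi-d}"
  define rr where "rr N = 1 - 1 / real (N+2)" for N :: nat
  define m where "m = 1 - cos d"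
  have m: "m > 0" unfolding m_def using d cos_monotone_0_pi[of 0 d] by simp
  have rr: "0 \<le> rr N" "rr N < 1" "1/2 \<le> rr N" for N unfolding rr_def by (auto simp: field_simps)
  have derf: "\<And>N x. x \<in> S \<Longrightarrow> (Cr (rr N) has_derivative (*) (- ln (1 - 2*rr N*cos x + (rr N)^2) / 2)) (at x within S)"
    by (rule has_derivative_at_withinI) (use Cr_deriv[OF rr(1,2)] in \<open>simp add: has_field_derivative_def\<close>)
  have nle: "\<forall>\<^sub>F N in sequentially. \<forall>x\<in>S. \<forall>h. norm ((- ln (1 - 2*rr N*cos x + (rr N)^2) / 2) * h - (- ln (2 - 2*cos x) / 2) * h) \<le> e * norm h"
    if e: "e > 0" for e
  proof -
    have "\<forall>\<^sub>F N in sequentially. 2 / (real (N+2) * m) \<le> e"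
    proof -
      have "((\<lambda>N. 2 / (real (N+2) * m)) \<longlongrightarrow> 0) sequentially" using m by real_asymp
      from order_tendstoD(2)[OF this e] show ?thesis by eventually_elim simp
    qed
    thus ?thesis
    proof eventually_elim
      case (elim N)
      show ?case
      proof (intro ballI allI)
        fix x h assume xS: "x \<in> S"
        have cx: "cos x \<le> cos d" using xS d by (intro cos_le_cos_delta) (auto simp: S_def)
        define r where "r = rr N"
        have r: "0 \<le> r" "r < 1" "1/2 \<le> r" using rr unfolding r_def by auto
        have a: "1 - 2*r*cos x + r^2 \<ge> m"
        proof -
          have "1 - 2*r*cos x + r^2 = (1 - r)^2 + 2*r*(1 - cos x)" by (simp add: power2_eq_square algebra_simps)
          moreover have "2*r*(1 - cos x) - (1 - cos x) = (2*r - 1)*(1 - cos x)" by (simp add: algebra_simps)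
          moreover have "(2*r - 1)*(1 - cos x) \<ge> 0" using r cos_le_one[of x] by (intro mult_nonneg_nonneg) auto
          moreover have "(1 - r)^2 \<ge> 0" by simp
          ultimately show ?thesis using cx unfolding m_def by linarith
        qed
        have b: "2 - 2*cos x \<ge> m" using cx cos_le_one[of x] unfolding m_def by linarith
        have ab: "\<bar>(1 - 2*r*cos x + r^2) - (2 - 2*cos x)\<bar> \<le> 4 * (1 - r)"
        proof -
          have "(1 - 2*r*cos x + r^2) - (2 - 2*cos x) = (r - 1) * (r + 1 - 2 * cos x)" by (simp add: power2_eq_square algebra_simps)
          moreover have "\<bar>r + 1 - 2 * cos x\<bar> \<le> 4" unfolding abs_le_iff using r cos_le_one[of x] cos_ge_minus_one[of x] by linarith
          moreover have "\<bar>r - 1\<bar> * \<bar>r + 1 - 2 * cos x\<bar> \<le> \<bar>r - 1\<bar> * 4" by (rule mult_left_mono) (use calculation in auto)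
          ultimately show ?thesis using r by (simp add: abs_mult)
        qed
        have "\<bar>ln (1 - 2*r*cos x + r^2) - ln (2 - 2*cos x)\<bar> \<le> 4 * (1 - r) / m"
          using ln_diff_bound[OF m a b] divide_right_mono[OF ab, of m] m by linarith
        also have "4 * (1 - r) / m = 2 * (2 / (real (N+2) * m))" unfolding r_def rr_def using m by (simp add: field_simps)
        finally have "\<bar>(- ln (1 - 2*r*cos x + r^2) / 2) - (- ln (2 - 2*cos x) / 2)\<bar> \<le> e"
          using elim by linarith
        hence "\<bar>(- ln (1 - 2*r*cos x + r^2) / 2) - (- ln (2 - 2*cos x) / 2)\<bar> * \<bar>h\<bar> \<le> e * \<bar>h\<bar>"
          by (rule mult_right_mono) simp
        thus "norm ((- ln (1 - 2*rr N*cos x + (rr N)^2) / 2) * h - (- ln (2 - 2*cos x) / 2) * h) \<le> e * norm h"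
          unfolding r_def by (metis abs_mult left_diff_distrib real_norm_def)
      qed
    qed
  qed
  have x0: "x \<in> S" using x by (simp add: S_def)
  have conv: "convex S" by (simp add: S_def)
  have lim: "(\<lambda>N. Cr (rr N) x) \<longlonglongrightarrow> clausen 2 x" unfolding rr_def by (rule Cr_lim)
  from has_derivative_sequence[OF conv derf _ x0 lim, where g'="\<lambda>x. (*) (- ln (2 - 2*cos x) / 2)"] nle
  obtain g where g: "\<And>y. y \<in> S \<Longrightarrow> (\<lambda>N. Cr (rr N) y) \<longlonglongrightarrow> g y \<and> (g has_derivative (*) (- ln (2 - 2*cos y) / 2)) (at y within S)"
    by blast
  have gc: "g y = clausen 2 y" if "y \<in> S" for y
    using g[OF that] Cr_lim[of y] unfolding rr_def by (blast intro: LIMSEQ_unique)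
  have "x \<in> interior S" using x by (simp add: S_def)
  hence "(g has_derivative (*) (- ln (2 - 2*cos x) / 2)) (at x)"
    using g[OF x0] at_within_interior[of x S] by simp
  hence "(g has_field_derivative (- ln (2 - 2*cos x) / 2)) (at x)" by (simp add: has_field_derivative_def)
  thus ?thesis
    by (rule has_field_derivative_transform_within_open[where S="{d<..<2*pi-d}"]) (use x gc in \<open>auto simp: S_def\<close>)
qed

lemma Cl2_deriv:
  assumes x: "0 < x" "x < 2*pi"
  shows "(clausen 2 has_real_derivative clausen 1 x) (at x)"
proof -
  define d where "d = min x (2*pi - x) / 2"
  have d1: "d \<le> x/2" "d \<le> (2*pi - x)/2" "d > 0" using x unfolding d_def by (auto simp: min_def)
  have d: "0 < d" "d < pi" "d < x" "x < 2*pi - d"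
    using d1 x by (auto simp: field_simps)
  have s: "sin (x/2) > 0" using x by (intro sin_gt_zero) auto
  have "2 - 2 * cos x = (2 * sin (x/2))^2"
    using cos_double_sin[of "x/2"] by (simp add: power2_eq_square algebra_simps)
  moreover have "ln ((2 * sin (x/2))^2) = 2 * ln (2 * sin (x/2))"
    using s by (subst ln_realpow) auto
  ultimately have "- ln (2 - 2*cos x) / 2 = - ln (2 * sin (x/2))"
    by simp
  also have "\<dots> = clausen 1 x" using s by (simp add: clausen_def)
  finally show ?thesis using Cl2_deriv_aux[OF d] by simp
qed

lemma Cl1_deriv:
  assumes x: "0 < x" "x < 2*pi"
  shows "(clausen 1 has_real_derivative - (cos (x/2) / (2 * sin (x/2)))) (at x)"
proof -
  have s: "sin (x/2) > 0" using x by (intro sin_gt_zero) auto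
  have "((\<lambda>x. - ln (2 * sin (x/2))) has_real_derivative - (cos (x/2) / (2 * sin (x/2)))) (at x)"
    using s by (auto intro!: derivative_eq_intros simp: field_simps)
  thus ?thesis
  proof (rule has_field_derivative_transform_within_open[where S="{0<..<2*pi}"])
    fix y :: real assume "y \<in> {0<..<2*pi}"
    hence "sin (y/2) > 0" by (intro sin_gt_zero) auto
    thus "- ln (2 * sin (y/2)) = clausen 1 y" by (simp add: clausen_def)
  qed (use x in auto)
qed

lemma rzeta_sums:
  assumes "k \<ge> 1"
  shows "(\<lambda>m. 1 / real (Suc m) ^ (2*k)) sums rzeta (real (2*k))"
proof -
  have e: "real (Suc m) powr real (2*k) = real (Suc m) ^ (2*k)" for m
    by (subst powr_realpow) auto
  have "summable (\<lambda>m. 1 / real (Suc m) ^ (2*k))" using assms by (intro summ_inv_pow) auto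
  hence "(\<lambda>m. 1 / real (Suc m) ^ (2*k)) sums (\<Sum>m. 1 / real (Suc m) ^ (2*k))" by (rule summable_sums)
  thus ?thesis unfolding rzeta_def e .
qed

lemma rzeta_bounds:
  assumes "k \<ge> 1"
  shows "0 \<le> rzeta (real (2*k))" "rzeta (real (2*k)) \<le> 3"
proof -
  have s: "(\<lambda>m. 1 / real (Suc m) ^ (2*k)) sums rzeta (real (2*k))" by (rule rzeta_sums[OF assms])
  show "0 \<le> rzeta (real (2*k))" by (rule sums_le[OF _ sums_zero s]) auto
  have s2: "(\<lambda>m. 1 / real (Suc m) ^ 2) sums (pi^2/6)"
    using inverse_squares_sums by (simp add: add.commute)
  have "rzeta (real (2*k)) \<le> pi^2/6"
    by (rule sums_le[OF _ s s2]) (rule inv_pow_le2, use assms in auto)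
  also have "pi^2/6 \<le> 16/6" using pi_less_4 pi_gt_zero by (intro divide_right_mono) (auto simp: power2_eq_square intro: mult_mono[of pi 4 pi 4, simplified])
  finally show "rzeta (real (2*k)) \<le> 3" by simp
qed

lemma ln_one_minus_sums:
  fixes t :: real assumes "0 \<le> t" "t < 1"
  shows "(\<lambda>k. t ^ Suc k / real (Suc k)) sums (- ln (1 - t))"
proof -
  have "\<bar>-t\<bar> < 1" using assms by simp
  from ln_series'[OF this] have "(\<lambda>n. - (t^n) / of_nat n) sums ln (1 - t)" by simp
  from sums_minus[OF this] have "(\<lambda>n. t^n / real n) sums (- ln (1 - t))" by simp
  thus ?thesis by (subst sums_Suc_iff) simp
qed

lemma sin_prod_pos:
  fixes y :: real assumes "0 < \<bar>y\<bar>" "\<bar>y\<bar> < 1"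
  shows "sin (pi * y) / (pi * y) > 0"
proof (cases "y > 0")
  case True
  hence "sin (pi * y) > 0" using assms by (intro sin_gt_zero) auto
  thus ?thesis using True by simp
next
  case False
  have "0 < pi * (-y)" using False assms by (intro mult_pos_pos) auto
  moreover have "pi * (-y) < pi * 1" using assms False by (intro mult_strict_left_mono) auto
  ultimately have "sin (pi * (-y)) > 0" by (intro sin_gt_zero) auto
  moreover have "pi * y < 0" using False assms by (simp add: mult_pos_neg)
  ultimately show ?thesis by (intro divide_neg_neg) auto
qed

lemma ln_sin_sums:
  fixes y :: real assumes y: "0 < \<bar>y\<bar>" "\<bar>y\<bar> < 1"
  shows "(\<lambda>m. - ln (1 - y^2 / real (Suc m)^2)) sums ln (pi * y / sin (pi * y))"
proof -
  have t: "0 \<le> y^2 / real (Suc m)^2" "y^2 / real (Suc m)^2 < 1" for m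
  proof -
    show "0 \<le> y^2 / real (Suc m)^2" by simp
    have "y^2 < 1" using y by (simp add: abs_square_less_1)
    also have "1 \<le> real (Suc m)^2" by simp
    finally show "y^2 / real (Suc m)^2 < 1" by simp
  qed
  have pos: "0 < 1 - y^2 / real (Suc m)^2" for m using t(2)[of m] by simp
  have "(\<lambda>N. pi * y * (\<Prod>k=1..N. 1 - y^2 / of_nat k^2)) \<longlonglongrightarrow> sin (pi * y)"
    by (rule sin_product_formula_real)
  have P: "(\<lambda>N. (\<Prod>k=1..N. 1 - y^2 / of_nat k^2)) \<longlonglongrightarrow> sin (pi * y) / (pi * y)"
    using y by (intro sin_product_formula_real') auto
  have P': "(\<lambda>N. (\<Prod>m<N. 1 - y^2 / real (Suc m)^2)) \<longlonglongrightarrow> sin (pi * y) / (pi * y)"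
    using P by (simp add: prod.atLeast1_atMost_eq)
  have L: "(\<lambda>N. ln (\<Prod>m<N. 1 - y^2 / real (Suc m)^2)) \<longlonglongrightarrow> ln (sin (pi * y) / (pi * y))"
    by (rule tendsto_ln[OF P']) (use sin_prod_pos[OF y] in auto)
  have "(\<lambda>N. - ln (\<Prod>m<N. 1 - y^2 / real (Suc m)^2)) \<longlonglongrightarrow> - ln (sin (pi * y) / (pi * y))"
    by (rule tendsto_minus[OF L])
  moreover have "- ln (\<Prod>m<N. 1 - y^2 / real (Suc m)^2) = (\<Sum>m<N. - ln (1 - y^2 / real (Suc m)^2))" for N
  proof -
    define g where "g m = 1 - y^2 / real (Suc m)^2" for m
    have nz: "g m \<noteq> 0" for m using pos[of m] unfolding g_def by linarith
    have "ln (prod g {..<N}) = (\<Sum>m<N. ln (g m))" by (rule ln_prod) (use nz in auto)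
    thus ?thesis unfolding g_def by (simp add: sum_negf)
  qed
  moreover have "- ln (sin (pi * y) / (pi * y)) = ln (pi * y / sin (pi * y))"
    using sin_prod_pos[OF y] by (subst ln_inverse[symmetric]) auto
  ultimately show ?thesis unfolding sums_def by simp
qed

lemma zeta_ln_sums:
  fixes y :: real assumes y: "0 < \<bar>y\<bar>" "\<bar>y\<bar> < 1"
  shows "(\<lambda>k. rzeta (real (2 * Suc k)) * y ^ (2 * Suc k) / real (Suc k)) sums ln (pi * y / sin (pi * y))"
proof -
  define t where "t m = y^2 / real (Suc m)^2" for m
  have t: "0 \<le> t m" "t m < 1" for m
  proof -
    show "0 \<le> t m" by (simp add: t_def)
    have "y^2 < 1" using y by (simp add: abs_square_less_1)
    also have "1 \<le> real (Suc m)^2" by simp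
    finally show "t m < 1" by (simp add: t_def)
  qed
  define f where "f = (\<lambda>(m,k). t m ^ Suc k / real (Suc k))"
  have fnn: "f (m,k) \<ge> 0" for m k using t by (simp add: f_def)
  have inner: "((\<lambda>k. f (m,k)) has_sum (- ln (1 - t m))) UNIV" for m
    by (rule sums_nonneg_imp_has_sum) (use ln_one_minus_sums[OF t] fnn in \<open>auto simp: f_def\<close>)
  have outer_s: "(\<lambda>m. - ln (1 - t m)) sums ln (pi * y / sin (pi * y))"
    using ln_sin_sums[OF y] by (simp add: t_def)
  have outer: "((\<lambda>m. - ln (1 - t m)) has_sum ln (pi * y / sin (pi * y))) UNIV"
    by (rule sums_nonneg_imp_has_sum[OF outer_s]) (use t in auto)
  have summ: "f summable_on (UNIV \<times> UNIV)"
    using summable_on_SigmaI[of UNIV f "\<lambda>_. UNIV" "\<lambda>m. - ln (1 - t m)"] inner outer fnn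
    by (auto simp: summable_on_def)
  have H: "(f has_sum ln (pi * y / sin (pi * y))) (UNIV \<times> UNIV)"
    using has_sum_SigmaI[of UNIV f "\<lambda>_. UNIV" "\<lambda>m. - ln (1 - t m)"] inner outer summ by auto
  hence H2: "((\<lambda>(k,m). f (m,k)) has_sum ln (pi * y / sin (pi * y))) (UNIV \<times> UNIV)"
    by (subst (asm) has_sum_swap) simp
  have inner2: "((\<lambda>m. f (m,k)) has_sum (rzeta (real (2 * Suc k)) * y ^ (2 * Suc k) / real (Suc k))) UNIV" for k
  proof -
    have "(\<lambda>m. 1 / real (Suc m) ^ (2 * Suc k)) sums rzeta (real (2 * Suc k))"
      by (rule rzeta_sums) simp
    from sums_mult[OF this, of "y ^ (2 * Suc k) / real (Suc k)"]
    have s1: "(\<lambda>m. y ^ (2 * Suc k) / real (Suc k) * (1 / real (Suc m) ^ (2 * Suc k))) sums (y ^ (2 * Suc k) / real (Suc k) * rzeta (real (2 * Suc k)))" .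
    have eq: "f (m,k) = y ^ (2 * Suc k) / real (Suc k) * (1 / real (Suc m) ^ (2 * Suc k))" for m
    proof -
      have "t m ^ Suc k = y^(2*Suc k) / real (Suc m)^(2*Suc k)" unfolding t_def power_divide power_mult ..
      thus ?thesis by (simp add: f_def)
    qed
    have "(\<lambda>m. f (m,k)) sums (rzeta (real (2 * Suc k)) * y ^ (2 * Suc k) / real (Suc k))"
      unfolding eq using s1 by (simp add: mult.commute)
    thus ?thesis by (rule sums_nonneg_imp_has_sum) (use fnn in auto)
  qed
  have "((\<lambda>k. rzeta (real (2 * Suc k)) * y ^ (2 * Suc k) / real (Suc k)) has_sum ln (pi * y / sin (pi * y))) UNIV"
    by (rule has_sum_SigmaD[OF H2]) (use inner2 in auto)
  thus ?thesis by (rule has_sum_imp_sums)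
qed

definition Tn :: "nat \<Rightarrow> real \<Rightarrow> real" where
  "Tn n x = (\<Sum>j=1..n. (-1)^j * (x^(2*n-2*j) * clausen (2*j) x / fact (2*n-2*j)
                 - x^(2*n+1-2*j) * clausen (2*j-1) x / fact (2*n+1-2*j)))"

lemma Tn_clsum:
  assumes "x \<noteq> 0"
  shows "x^(2*n-1) * clsum n x = Tn n x"
  unfolding clsum_def Tn_def sum_distrib_left
proof (rule sum.cong[OF refl])
  fix j assume j: "j \<in> {1..n}"
  define p where "p = 2*n - 2*j"
  have e1: "2*n+1-2*j = Suc p" and e2: "2*n-1 = p + (2*j-1)" and e3: "2*n-2*j = p"
    using j by (auto simp: p_def)
  have xp: "x^(2*j-1) \<noteq> 0" using assms by simp
  show "x^(2*n-1) * ((-1)^j * (real (2*n+1-2*j) * clausen (2*j) x - x * clausen (2*j-1) x) /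
          (fact (2*n+1-2*j) * x^(2*j-1))) =
        (-1)^j * (x^(2*n-2*j) * clausen (2*j) x / fact (2*n-2*j) - x^(2*n+1-2*j) * clausen (2*j-1) x / fact (2*n+1-2*j))"
    unfolding e1 e2 e3 using xp assms
    by (simp add: power_add fact_Suc field_simps del: of_nat_Suc)
qed

lemma gen_deriv:
  fixes C D :: "real \<Rightarrow> real"
  assumes C: "(C has_real_derivative D x) (at x)" and D: "(D has_real_derivative D1) (at x)"
  shows "((\<lambda>x. x^p * C x / fact p - x^(Suc p) * D x / fact (Suc p)) has_real_derivative
           ((if p = 0 then 0 else x^(p-1) * C x / fact (p-1)) - x^(Suc p) * D1 / fact (Suc p))) (at x)"
proof (cases p)
  case 0
  have "((\<lambda>x. C x - x * D x) has_real_derivative (D x - (1 * D x + x * D1))) (at x)"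
    by (rule derivative_eq_intros C D refl | simp)+
  thus ?thesis using 0 by simp
next
  case (Suc q)
  have "((\<lambda>x. x^p * C x / fact p - x^(Suc p) * D x / fact (Suc p)) has_real_derivative
          ((real p * x^(p-1) * C x + x^p * D x) / fact p - (real (Suc p) * x^p * D x + x^(Suc p) * D1) / fact (Suc p))) (at x)"
    by (rule derivative_eq_intros C D refl | simp add: mult_ac)+
  moreover have "(real p * x^(p-1) * C x + x^p * D x) / fact p - (real (Suc p) * x^p * D x + x^(Suc p) * D1) / fact (Suc p)
        = x^(p-1) * C x / fact (p-1) - x^(Suc p) * D1 / fact (Suc p)"
    using Suc by (simp add: fact_Suc field_simps del: of_nat_Suc)
  ultimately show ?thesis using Suc by simp
qed

definition c1 :: "real \<Rightarrow> real" where "c1 x = - (cos (x/2) / (2 * sin (x/2)))"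

definition En :: "nat \<Rightarrow> real \<Rightarrow> nat \<Rightarrow> real" where
  "En n x j = (if j = 0 then - (x^(2*n-1) * c1 x / fact (2*n-1))
               else if j < n then x^(2*n-2*j-1) * clausen (2*j) x / fact (2*n-2*j-1) else 0)"

lemma term_deriv:
  assumes x: "0 < x" "x < 2*pi" and j: "1 \<le> j" "j \<le> n"
  shows "((\<lambda>x. (-1)^j * (x^(2*n-2*j) * clausen (2*j) x / fact (2*n-2*j)
                 - x^(2*n+1-2*j) * clausen (2*j-1) x / fact (2*n+1-2*j))) has_real_derivative
          (-1)^j * (En n x j + En n x (j-1))) (at x)"
proof -
  define p where "p = 2*n - 2*j"
  have e1: "2*n+1-2*j = Suc p" using j by (auto simp: p_def)
  have ifp: "(if p = 0 then 0 else x^(p-1) * clausen (2*j) x / fact (p-1)) = En n x j"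
    using j by (auto simp: En_def p_def)
  have fe: "(\<lambda>x. (-1)^j * (x^(2*n-2*j) * clausen (2*j) x / fact (2*n-2*j)
                 - x^(2*n+1-2*j) * clausen (2*j-1) x / fact (2*n+1-2*j))) =
            (\<lambda>x. (-1)^j * (x^p * clausen (2*j) x / fact p - x^(Suc p) * clausen (2*j-1) x / fact (Suc p)))"
    unfolding e1 p_def ..
  have "((\<lambda>x. x^p * clausen (2*j) x / fact p - x^(Suc p) * clausen (2*j-1) x / fact (Suc p)) has_real_derivative
           (En n x j + En n x (j-1))) (at x)"
  proof (cases "j = 1")
    case True
    have jj: "2*j = 2" "2*j-1 = 1" using True by auto
    have g: "((\<lambda>x. x^p * clausen 2 x / fact p - x^(Suc p) * clausen 1 x / fact (Suc p)) has_real_derivative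
           ((if p = 0 then 0 else x^(p-1) * clausen 2 x / fact (p-1)) - x^(Suc p) * c1 x / fact (Suc p))) (at x)"
      by (rule gen_deriv[where C="clausen 2" and D="clausen 1", OF Cl2_deriv[OF x]]) (use Cl1_deriv[OF x] in \<open>simp add: c1_def\<close>)
    have sp: "Suc p = 2*n-1" using j True by (simp add: p_def)
    have e0: "En n x (j-1) = - (x^(Suc p) * c1 x / fact (Suc p))" unfolding sp using True by (simp add: En_def)
    have ifp': "(if p = 0 then 0 else x^(p-1) * clausen 2 x / fact (p-1)) = En n x j" using ifp unfolding jj .
    have "(if p = 0 then 0 else x^(p-1) * clausen 2 x / fact (p-1)) - x^(Suc p) * c1 x / fact (Suc p) = En n x j + En n x (j-1)"
      unfolding ifp' e0 by simp
    with g show ?thesis unfolding jj by simp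
  next
    case False
    hence j2: "j \<ge> 2" using j by auto
    have dC: "(clausen (2*j) has_real_derivative clausen (2*j-1) x) (at x)"
      using j2 by (intro clausen_deriv_even) auto
    have "2*j-1 = 2*(j-1)+1" using j2 by simp
    hence dD: "(clausen (2*j-1) has_real_derivative - clausen (2*(j-1)) x) (at x)"
      using clausen_deriv_odd[of "j-1" x] j2 by simp
    have "((\<lambda>x. x^p * clausen (2*j) x / fact p - x^(Suc p) * clausen (2*j-1) x / fact (Suc p)) has_real_derivative
           ((if p = 0 then 0 else x^(p-1) * clausen (2*j) x / fact (p-1)) - x^(Suc p) * (- clausen (2*(j-1)) x) / fact (Suc p))) (at x)"
      by (rule gen_deriv[OF dC dD])
    moreover have "En n x (j-1) = x^(Suc p) * clausen (2*(j-1)) x / fact (Suc p)"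
    proof -
      have "j - 1 \<noteq> 0" "j - 1 < n" "2*n - 2*(j-1) - 1 = Suc p" using j2 j by (auto simp: p_def)
      thus ?thesis by (simp add: En_def)
    qed
    ultimately show ?thesis using ifp by simp
  qed
  from DERIV_cmult[OF this, of "(-1)^j"] show ?thesis unfolding fe .
qed

lemma telescope_aux:
  fixes F :: "nat \<Rightarrow> real"
  shows "(\<Sum>j=1..n. F j - F (j-1)) = F n - F 0"
  by (induction n) (auto simp: sum.atLeast_Suc_atMost)

lemma Tn_deriv:
  assumes x: "0 < x" "x < 2*pi" and n: "n \<ge> 1"
  shows "(Tn n has_real_derivative x^(2*n-1) * c1 x / fact (2*n-1)) (at x)"
proof -
  have "(Tn n has_real_derivative (\<Sum>j=1..n. (-1)^j * (En n x j + En n x (j-1)))) (at x)"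
    unfolding Tn_def[abs_def] by (rule DERIV_sum) (use term_deriv[OF x] in auto)
  moreover have "(\<Sum>j=1..n. (-1)^j * (En n x j + En n x (j-1))) = (\<Sum>j=1..n. (-1)^j * En n x j - (-1)^(j-1) * En n x (j-1))"
  proof (rule sum.cong[OF refl])
    fix j assume "j \<in> {1..n}"
    then obtain i where i: "j = Suc i" by (cases j) auto
    show "(-1)^j * (En n x j + En n x (j-1)) = (-1)^j * En n x j - (-1)^(j-1) * En n x (j-1)"
      unfolding i by (simp add: algebra_simps)
  qed
  moreover have "\<dots> = (-1)^n * En n x n - (-1)^0 * En n x 0"
    by (rule telescope_aux)
  moreover have "\<dots> = x^(2*n-1) * c1 x / fact (2*n-1)" using n by (simp add: En_def)
  ultimately show ?thesis by simp
qed

lemma xCl1_lim: "((\<lambda>x. x * clausen 1 x) \<longlongrightarrow> 0) (at_right 0)"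
proof -
  have "((\<lambda>x::real. - (x * ln (2 * sin (x/2)))) \<longlongrightarrow> 0) (at_right 0)" by real_asymp
  moreover have "\<forall>\<^sub>F x in at_right 0. - (x * ln (2 * sin (x/2))) = x * clausen 1 x"
  proof -
    have "\<forall>\<^sub>F x in at_right (0::real). x < 2*pi"
      unfolding eventually_at_right_field by (intro exI[of _ "2*pi"]) auto
    moreover have "\<forall>\<^sub>F x in at_right (0::real). x > 0" by (rule eventually_at_right_less)
    ultimately show ?thesis
    proof eventually_elim
      case (elim x)
      hence "sin (x/2) > 0" by (intro sin_gt_zero) auto
      thus ?case by (simp add: clausen_def)
    qed
  qed
  ultimately show ?thesis by (rule Lim_transform_eventually)
qed

lemma Tn_lim:
  assumes n: "n \<ge> 1"
  shows "(Tn n \<longlongrightarrow> 0) (at_right 0)"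
proof -
  have "((\<lambda>x. \<Sum>j=1..n. (-1)^j * (x^(2*n-2*j) * clausen (2*j) x / fact (2*n-2*j)
                 - x^(2*n+1-2*j) * clausen (2*j-1) x / fact (2*n+1-2*j))) \<longlongrightarrow> (\<Sum>j=1..n. 0)) (at_right 0)"
  proof (rule tendsto_sum)
    fix j assume j: "j \<in> {1..n}"
    have cc: "continuous_on UNIV (clausen (2*j))" using j by (intro clausen_cont) auto
    have A: "((\<lambda>x. x^(2*n-2*j) * clausen (2*j) x / fact (2*n-2*j)) \<longlongrightarrow> 0^(2*n-2*j) * clausen (2*j) 0 / fact (2*n-2*j)) (at_right 0)"
      by (intro tendsto_intros tendsto_within_subset[OF continuous_on_tendsto_compose[OF cc tendsto_ident_at]]) auto
    have A0: "clausen (2*j) 0 = 0" using j by (intro clausen_even_0) auto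
    have B: "((\<lambda>x. x^(2*n+1-2*j) * clausen (2*j-1) x / fact (2*n+1-2*j)) \<longlongrightarrow> 0) (at_right 0)"
    proof (cases "j = 1")
      case True
      have "((\<lambda>x. x^(2*n-2) * (x * clausen 1 x) / fact (2*n-1)) \<longlongrightarrow> 0^(2*n-2) * 0 / fact (2*n-1)) (at_right 0)"
        by (intro tendsto_intros xCl1_lim) auto
      moreover have eqx: "x^(2*n-2) * (x * clausen 1 x) = x^(2*n+1-2*j) * clausen (2*j-1) x" for x :: real
      proof -
        have "2*n+1-2*j = Suc (2*n-2)" "2*j-1 = 1" using True n by auto
        thus ?thesis by (simp only: power_Suc mult_ac)
      qed
      ultimately have lim: "((\<lambda>x. x^(2*n-2) * (x * clausen 1 x) / fact (2*n-1)) \<longlongrightarrow> 0) (at_right 0)" by simp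
      have e2: "2*n-1 = 2*n+1-2*j" using True n by auto
      have eqf: "(\<lambda>x. x^(2*n-2) * (x * clausen 1 x) / fact (2*n-1)) = (\<lambda>x. x^(2*n+1-2*j) * clausen (2*j-1) x / fact (2*n+1-2*j))"
        by (rule ext) (simp only: e2[symmetric] eqx)
      show ?thesis using lim unfolding eqf .
    next
      case False
      hence cc2: "continuous_on UNIV (clausen (2*j-1))" using j by (intro clausen_cont) auto
      have L: "((\<lambda>x. x^(2*n+1-2*j) * clausen (2*j-1) x / fact (2*n+1-2*j)) \<longlongrightarrow> 0^(2*n+1-2*j) * clausen (2*j-1) 0 / fact (2*n+1-2*j)) (at_right 0)"
        by (intro tendsto_intros tendsto_within_subset[OF continuous_on_tendsto_compose[OF cc2 tendsto_ident_at]]) auto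
      have z: "(0::real)^(2*n+1-2*j) = 0" using j by (intro zero_power) auto
      show ?thesis using L unfolding z by simp
    qed
    have "((\<lambda>x. (-1)^j * (x^(2*n-2*j) * clausen (2*j) x / fact (2*n-2*j)
                 - x^(2*n+1-2*j) * clausen (2*j-1) x / fact (2*n+1-2*j))) \<longlongrightarrow> ((-1)^j * (0^(2*n-2*j) * clausen (2*j) 0 / fact (2*n-2*j) - 0))) (at_right 0)"
      by (intro tendsto_intros A B)
    thus "((\<lambda>x. (-1)^j * (x^(2*n-2*j) * clausen (2*j) x / fact (2*n-2*j)
                 - x^(2*n+1-2*j) * clausen (2*j-1) x / fact (2*n+1-2*j))) \<longlongrightarrow> 0) (at_right 0)"
      using A0 by simp
  qed
  thus ?thesis by (simp add: Tn_def[abs_def])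
qed

definition pk :: "nat \<Rightarrow> nat \<Rightarrow> real \<Rightarrow> real" where
  "pk m k y = rzeta (real (2*Suc k)) / (real (Suc k) * real (2*Suc k + 2*m + 1)) * y^(2*Suc k + 2*m + 1)"

definition pk' :: "nat \<Rightarrow> nat \<Rightarrow> real \<Rightarrow> real" where
  "pk' m k y = rzeta (real (2*Suc k)) / real (Suc k) * y^(2*Suc k + 2*m)"

lemma pk_deriv: "(pk m k has_real_derivative pk' m k y) (at y within S)"
proof -
  have "(pk m k has_real_derivative rzeta (real (2*Suc k)) / (real (Suc k) * real (2*Suc k + 2*m + 1)) *
          (real (2*Suc k + 2*m + 1) * y^(2*Suc k + 2*m))) (at y within S)"
    unfolding pk_def[abs_def] by (rule derivative_eq_intros refl)+ simp
  thus ?thesis by (simp add: pk'_def del: of_nat_Suc of_nat_add)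
qed

lemma P_deriv:
  assumes y: "\<bar>y\<bar> < 1"
  shows "summable (\<lambda>k. pk m k y)"
    and "((\<lambda>y. \<Sum>k. pk m k y) has_real_derivative (\<Sum>k. pk' m k y)) (at y)"
proof -
  define \<rho> where "\<rho> = (1 + \<bar>y\<bar>) / 2"
  have \<rho>: "0 < \<rho>" "\<rho> < 1" "\<bar>y\<bar> < \<rho>" using y by (auto simp: \<rho>_def)
  have uc: "uniformly_convergent_on (ball 0 \<rho>) (\<lambda>n x. \<Sum>k<n. pk' m k x)"
  proof (rule Weierstrass_m_test'[where M="\<lambda>k. 3 * \<rho>^k"])
    fix k :: nat and x :: real assume "x \<in> ball 0 \<rho>"
    hence x: "\<bar>x\<bar> < \<rho>" by simp
    have z: "0 \<le> rzeta (real (2*Suc k))" "rzeta (real (2*Suc k)) \<le> 3"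
      using rzeta_bounds[of "Suc k"] by auto
    have "norm (pk' m k x) = rzeta (real (2*Suc k)) / real (Suc k) * \<bar>x\<bar>^(2*Suc k + 2*m)"
      using z by (simp add: pk'_def abs_mult power_abs)
    also have "\<dots> \<le> 3 / 1 * \<rho>^k"
    proof (intro mult_mono frac_le)
      have "\<bar>x\<bar>^(2*Suc k + 2*m) \<le> \<rho>^(2*Suc k + 2*m)" using x by (intro power_mono) auto
      also have "\<dots> \<le> \<rho>^k" using \<rho> by (intro power_decreasing) auto
      finally show "\<bar>x\<bar>^(2*Suc k + 2*m) \<le> \<rho>^k" .
    qed (use z \<rho> in auto)
    finally show "norm (pk' m k x) \<le> 3 * \<rho>^k" by simp
  next
    show "summable (\<lambda>k. 3 * \<rho>^k)" using \<rho> by (intro summable_mult summable_geometric) auto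
  qed
  have d: "\<And>k x. x \<in> ball 0 \<rho> \<Longrightarrow> (pk m k has_real_derivative pk' m k x) (at x within ball 0 \<rho>)"
    by (rule pk_deriv)
  have s0: "summable (\<lambda>k. pk m k 0)" by (simp add: pk_def)
  have yi: "y \<in> interior (ball 0 \<rho>)" using \<rho> by simp
  from has_field_derivative_series'[OF convex_ball d uc _ s0 yi]
  show "summable (\<lambda>k. pk m k y)" "((\<lambda>y. \<Sum>k. pk m k y) has_real_derivative (\<Sum>k. pk' m k y)) (at y)"
    using \<rho> by auto
qed

lemma pk'_sum:
  assumes y: "0 < \<bar>y\<bar>" "\<bar>y\<bar> < 1"
  shows "(\<Sum>k. pk' m k y) = y^(2*m) * ln (pi * y / sin (pi * y))"
proof -
  from sums_mult[OF zeta_ln_sums[OF y], of "y^(2*m)"]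
  have "(\<lambda>k. y^(2*m) * (rzeta (real (2 * Suc k)) * y ^ (2 * Suc k) / real (Suc k))) sums (y^(2*m) * ln (pi * y / sin (pi * y)))" .
  moreover have "y^(2*m) * (rzeta (real (2 * Suc k)) * y ^ (2 * Suc k) / real (Suc k)) = pk' m k y" for k
    by (simp add: pk'_def power_add field_simps del: of_nat_Suc)
  ultimately show ?thesis by (simp add: sums_iff)
qed

definition Hf :: "nat \<Rightarrow> real \<Rightarrow> real" where
  "Hf m y = y^(2*m+1) * (- 1 / (2*real m + 1)^2 + 1 / (2*real m + 1) * ln (pi * y / sin (pi * y)))
            - fact (2*m) / (2*pi)^(2*m+1) * Tn (Suc m) (2*pi*y)"

lemma Hf_deriv:
  assumes y: "0 < y" "y < 1"
  shows "(Hf m has_real_derivative y^(2*m) * ln (pi * y / sin (pi * y))) (at y)"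
proof -
  have s: "sin (pi * y) > 0" using y by (intro sin_gt_zero) auto
  have s2: "sin (2*pi*y/2) = sin (pi * y)" "cos (2*pi*y/2) = cos (pi * y)" by simp_all
  have x: "0 < 2*pi*y" "2*pi*y < 2*pi" using y by auto
  have T: "((\<lambda>y. Tn (Suc m) (2*pi*y)) has_real_derivative
             ((2*pi*y)^(2*Suc m-1) * c1 (2*pi*y) / fact (2*Suc m-1)) * (2*pi)) (at y)"
    by (rule DERIV_chain2[where g="\<lambda>y. 2*pi*y", OF Tn_deriv[OF x, of "Suc m"]]) (auto intro!: derivative_eq_intros)
  have L: "((\<lambda>y. ln (pi * y / sin (pi * y))) has_real_derivative (1/y - pi * cos (pi * y) / sin (pi * y))) (at y)"
  proof -
    have "((\<lambda>y. ln (pi * y / sin (pi * y))) has_real_derivative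
           (1 / (pi * y / sin (pi * y))) * ((pi * sin (pi * y) - pi * y * (cos (pi * y) * pi)) / (sin (pi * y))^2)) (at y)"
      using s y by (auto intro!: derivative_eq_intros simp: power2_eq_square)
    moreover have "(1 / (pi * y / sin (pi * y))) * ((pi * sin (pi * y) - pi * y * (cos (pi * y) * pi)) / (sin (pi * y))^2)
                   = 1/y - pi * cos (pi * y) / sin (pi * y)"
      using s y by (simp add: field_simps power2_eq_square)
    ultimately show ?thesis by simp
  qed
  define N where "N = 2*real m + 1"
  define c where "c = fact (2*m) / (2*pi)^(2*m+1)"
  have A: "((\<lambda>y. y^(2*m+1)) has_real_derivative real (2*m+1) * y^(2*m+1 - Suc 0)) (at y)" by (rule DERIV_pow)
  have B: "((\<lambda>y. - 1 / N^2 + 1 / N * ln (pi * y / sin (pi * y))) has_real_derivative 0 + 1 / N * (1/y - pi * cos (pi * y) / sin (pi * y))) (at y)"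
    by (rule DERIV_add[OF DERIV_const DERIV_cmult[OF L]])
  have D: "((\<lambda>y. y^(2*m+1) * (- 1 / N^2 + 1 / N * ln (pi * y / sin (pi * y))) - c * Tn (Suc m) (2*pi*y)) has_real_derivative
          (real (2*m+1) * y^(2*m+1 - Suc 0) * (- 1 / N^2 + 1 / N * ln (pi * y / sin (pi * y)))
           + (0 + 1 / N * (1/y - pi * cos (pi * y) / sin (pi * y))) * y^(2*m+1))
          - c * (((2*pi*y)^(2*Suc m-1) * c1 (2*pi*y) / fact (2*Suc m-1)) * (2*pi))) (at y)"
    by (rule DERIV_diff[OF DERIV_mult[OF A B] DERIV_cmult[OF T]])
  have hf: "Hf m = (\<lambda>y. y^(2*m+1) * (- 1 / N^2 + 1 / N * ln (pi * y / sin (pi * y))) - c * Tn (Suc m) (2*pi*y))"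
    by (simp add: Hf_def[abs_def] N_def c_def)
  have "(Hf m has_real_derivative
          (real (2*m+1) * y^(2*m) * (- 1 / (2*real m + 1)^2 + 1 / (2*real m + 1) * ln (pi * y / sin (pi * y)))
           + y^(2*m+1) * (1 / (2*real m + 1) * (1/y - pi * cos (pi * y) / sin (pi * y))))
          - fact (2*m) / (2*pi)^(2*m+1) * (((2*pi*y)^(2*Suc m-1) * c1 (2*pi*y) / fact (2*Suc m-1)) * (2*pi))) (at y)"
    unfolding hf by (rule DERIV_cong[OF D]) (simp add: N_def c_def)
  moreover have "(real (2*m+1) * y^(2*m) * (- 1 / (2*real m + 1)^2 + 1 / (2*real m + 1) * ln (pi * y / sin (pi * y)))
           + y^(2*m+1) * (1 / (2*real m + 1) * (1/y - pi * cos (pi * y) / sin (pi * y))))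
          - fact (2*m) / (2*pi)^(2*m+1) * (((2*pi*y)^(2*Suc m-1) * c1 (2*pi*y) / fact (2*Suc m-1)) * (2*pi))
        = y^(2*m) * ln (pi * y / sin (pi * y))"
  proof -
    have e: "2*Suc m - 1 = Suc (2*m)" by simp
    have f: "fact (Suc (2*m)) = (2*real m + 1) * (fact (2*m) :: real)" by (simp add: fact_Suc)
    have p: "(2*pi*y)^(Suc (2*m)) = (2*pi)^(2*m+1) * (y * y^(2*m))" by (simp add: power_mult_distrib)
    have alg: "N*q*(-1/N^2 + 1/N*l) + y*q*(1/N*(1/y - pp*C/S)) - F/K * ((K*(y*q)) * (-(C/(2*S))) / (N*F) * (2*pp)) = q*l"
      if "N > 0" "F > 0" "S \<noteq> 0" "y \<noteq> 0" "K \<noteq> 0" for N F S K C q l pp :: real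
      using that by (simp add: field_simps power2_eq_square)
    have rn: "real (2*m+1) = 2*real m + 1" by simp
    show ?thesis unfolding e f p c1_def s2 rn
      using alg[where N="2*real m + 1" and F="fact (2*m)" and S="sin (pi*y)" and K="(2*pi)^(2*m+1)" and C="cos (pi*y)" and q="y^(2*m)" and l="ln (pi * y / sin (pi * y))" and pp=pi] s y
      by (simp add: mult_ac)
  qed
  ultimately show ?thesis by simp
qed

lemma Hf_lim: "(Hf m \<longlongrightarrow> 0) (at_right 0)"
proof -
  have l1: "((\<lambda>y::real. ln (pi * y / sin (pi * y))) \<longlongrightarrow> 0) (at_right 0)" by real_asymp
  have A: "((\<lambda>y. y^(2*m+1) * (- 1 / (2*real m + 1)^2 + 1 / (2*real m + 1) * ln (pi * y / sin (pi * y))))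
            \<longlongrightarrow> 0^(2*m+1) * (- 1 / (2*real m + 1)^2 + 1 / (2*real m + 1) * 0)) (at_right 0)"
    by (intro tendsto_intros l1)
  have f: "filterlim (\<lambda>y::real. 2*pi*y) (at_right 0) (at_right 0)" by real_asymp
  have B: "((\<lambda>y. Tn (Suc m) (2*pi*y)) \<longlongrightarrow> 0) (at_right 0)"
    by (rule filterlim_compose[OF Tn_lim f]) simp
  have "(Hf m \<longlongrightarrow> 0^(2*m+1) * (- 1 / (2*real m + 1)^2 + 1 / (2*real m + 1) * 0) - fact (2*m) / (2*pi)^(2*m+1) * 0) (at_right 0)"
    unfolding Hf_def[abs_def] by (intro tendsto_intros A B)
  thus ?thesis by simp
qed

lemma P_lim: "((\<lambda>y. \<Sum>k. pk m k y) \<longlongrightarrow> 0) (at_right 0)"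
proof -
  have "isCont (\<lambda>y. \<Sum>k. pk m k y) 0" by (rule DERIV_isCont[OF P_deriv(2)]) simp
  hence "((\<lambda>y. \<Sum>k. pk m k y) \<longlongrightarrow> (\<Sum>k. pk m k 0)) (at_right 0)"
    by (simp add: isCont_def filterlim_at_split)
  moreover have "(\<Sum>k. pk m k 0) = 0" by (simp add: pk_def)
  ultimately show ?thesis by simp
qed

lemma PH_eq:
  assumes y: "0 < y" "y < 1"
  shows "(\<Sum>k. pk m k y) = Hf m y"
proof -
  define Q where "Q t = (\<Sum>k. pk m k t) - Hf m t" for t
  have dQ: "DERIV Q t :> 0" if "t \<in> {0<..<1}" for t
  proof -
    have t: "0 < \<bar>t\<bar>" "\<bar>t\<bar> < 1" "0 < t" "t < 1" using that by auto
    have "DERIV Q t :> (\<Sum>k. pk' m k t) - t^(2*m) * ln (pi * t / sin (pi * t))"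
      unfolding Q_def[abs_def] by (rule DERIV_diff[OF P_deriv(2)[OF t(2)] Hf_deriv[OF t(3,4)]])
    thus ?thesis using pk'_sum[OF t(1,2)] by simp
  qed
  have const: "Q t = Q y" if "t \<in> {0<..<1}" for t
    by (rule DERIV_isconst3[of 0 1 t y Q]) (use that y dQ in auto)
  have "(Q \<longlongrightarrow> 0 - 0) (at_right 0)" unfolding Q_def[abs_def] by (intro tendsto_intros P_lim Hf_lim)
  hence L1: "(Q \<longlongrightarrow> 0) (at_right 0)" by simp
  have "\<forall>\<^sub>F t in at_right 0. Q y = Q t"
    unfolding eventually_at_right_field by (intro exI[of _ 1]) (auto simp: const)
  hence L2: "(Q \<longlongrightarrow> Q y) (at_right 0)" by (rule Lim_transform_eventually[OF tendsto_const])
  have "Q y = 0" using tendsto_unique[OF _ L2 L1] by simp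
  thus ?thesis by (simp add: Q_def)
qed

definition gt :: "nat \<Rightarrow> real \<Rightarrow> nat \<Rightarrow> real" where
  "gt n y k = rzeta (real (2*k)) * y^(2*k) / (real k * real (2*k - 1 + 2*n))"

definition RG :: "nat \<Rightarrow> real \<Rightarrow> real" where
  "RG n y = - 1 / (2 * real n - 1)^2 + 1 / (2 * real n - 1) * ln (pi * y / sin (pi * y))
            - fact (2*n-2) * clsum n (2 * pi * y)"

lemma G_pos:
  assumes y: "0 < y" "y < 1"
  shows "(\<lambda>k. gt (Suc m) y (Suc k)) sums RG (Suc m) y"
proof -
  have yp: "y^(2*m+1) > 0" using y by simp
  have e: "pk m k y = y^(2*m+1) * gt (Suc m) y (Suc k)" for k
  proof -
    have "2 * Suc k - 1 + 2 * Suc m = 2*Suc k + 2*m + 1" by simp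
    thus ?thesis by (simp add: pk_def gt_def power_add field_simps del: of_nat_Suc of_nat_add)
  qed
  have "(\<lambda>k. pk m k y) sums Hf m y" using P_deriv(1)[of y m] PH_eq[OF y, of m] y by (simp add: sums_iff)
  note sd = sums_divide[OF this, of "y^(2*m+1)"]
  have "(\<lambda>k. pk m k y / y^(2*m+1)) = (\<lambda>k. gt (Suc m) y (Suc k))"
    by (rule ext) (use yp y in \<open>simp add: e\<close>)
  with sd have "(\<lambda>k. gt (Suc m) y (Suc k)) sums (Hf m y / y^(2*m+1))" by simp
  moreover have "Hf m y / y^(2*m+1) = RG (Suc m) y"
  proof -
    have x0: "2*pi*y \<noteq> 0" using y by simp
    have tc: "Tn (Suc m) (2*pi*y) = (2*pi*y)^(2*m+1) * clsum (Suc m) (2*pi*y)"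
      using Tn_clsum[OF x0, of "Suc m"] by simp
    have r: "2 * real (Suc m) - 1 = 2 * real m + 1" by simp
    have alg: "(Y * a - F / K * (K * Y * c)) / Y = a - F * c" if "Y \<noteq> 0" "K \<noteq> 0" for Y a F K c :: real
      using that by (simp add: field_simps)
    have pm: "(2*pi*y)^(2*m+1) = (2*pi)^(2*m+1) * y^(2*m+1)" by (simp add: power_mult_distrib)
    have f2: "2 * Suc m - 2 = 2*m" by simp
    show ?thesis unfolding Hf_def RG_def tc r pm f2
      by (rule alg) (use yp in auto)
  qed
  ultimately show ?thesis by simp
qed

lemma clausen_even_neg:
  assumes "j \<ge> 1" shows "clausen (2*j) (-x) = - clausen (2*j) x"
proof -
  have s: "summable (\<lambda>i. sin (real (Suc i) * x) / real (Suc i) ^ (2*j))"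
    by (rule summable_comparison_test'[OF summ_inv_pow[of "2::nat"]]) (use cl_sin_bound assms in auto)
  show ?thesis using assms suminf_minus[OF s] by (simp add: clausen_even)
qed

lemma clausen_odd_neg:
  assumes "j \<ge> 1" shows "clausen (2*j-1) (-x) = clausen (2*j-1) x"
proof (cases "j = 1")
  case True thus ?thesis by (simp add: clausen_def)
next
  case False
  hence "odd (2*j-1)" "2*j-1 \<ge> 2" using assms by auto
  thus ?thesis by (simp add: clausen_odd)
qed

lemma aux_neg: "(s::real) * (c * (- A) - (- x) * B) / (f * (- X)) = s * (c * A - x * B) / (f * X)"
proof -
  have "s * (c * (- A) - (- x) * B) = - (s * (c * A - x * B))" by (simp add: algebra_simps)
  moreover have "f * (- X) = - (f * X)" by simp
  ultimately show ?thesis by (simp only: minus_divide_divide)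
qed

lemma clsum_neg: "clsum n (-x) = clsum n x"
  unfolding clsum_def
proof (rule sum.cong[OF refl])
  fix j assume j: "j \<in> {1..n}"
  have o: "(-x)^(2*j-1) = - (x^(2*j-1))" using j by (simp add: power_minus_odd)
  have j1: "j \<ge> 1" using j by simp
  show "(-1)^j * (real (2*n+1-2*j) * clausen (2*j) (-x) - (-x) * clausen (2*j-1) (-x)) / (fact (2*n+1-2*j) * (-x)^(2*j-1)) =
        (-1)^j * (real (2*n+1-2*j) * clausen (2*j) x - x * clausen (2*j-1) x) / (fact (2*n+1-2*j) * x^(2*j-1))"
    unfolding o clausen_even_neg[of j x, OF j1] clausen_odd_neg[of j x, OF j1]
    by (rule aux_neg)
qed

lemma G_sums:
  assumes n: "n \<ge> 1" and y: "0 < \<bar>y\<bar>" "\<bar>y\<bar> < 1"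
  shows "(\<lambda>k. gt n y (Suc k)) sums RG n y"
proof -
  obtain m where m: "n = Suc m" using n by (cases n) auto
  show ?thesis
  proof (cases "y > 0")
    case True thus ?thesis using G_pos[of y m] y m by auto
  next
    case False
    hence "0 < -y" "-y < 1" using y by auto
    from G_pos[OF this, of m]
    have "(\<lambda>k. gt n (-y) (Suc k)) sums RG n (-y)" using m by simp
    moreover have "gt n (-y) k = gt n y k" for k by (simp add: gt_def power_mult[symmetric] power_mult_distrib)
    moreover have "RG n (-y) = RG n y"
      unfolding RG_def using clsum_neg[of n "2*pi*y"] by simp
    ultimately show ?thesis by simp
  qed
qed

lemma sqrt5_bounds: "2 < sqrt (5::real)" "sqrt (5::real) < 3"
proof -
  show "2 < sqrt (5::real)" by (rule real_less_rsqrt) simp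
  show "sqrt (5::real) < 3" by (rule real_less_lsqrt) simp_all
qed

lemma ab_facts:
  "gr_alpha * gr_beta = -1" "gr_alpha > 1" "gr_beta < 0" "- 1 < gr_beta" "gr_alpha^2 = gr_alpha + 1" "gr_beta^2 = gr_beta + 1"
  "gr_alpha > 0" "\<bar>gr_beta\<bar> < gr_alpha" "gr_beta \<noteq> 0"
  using sqrt5_bounds unfolding gr_alpha_def gr_beta_def
  by (auto simp: field_simps power2_eq_square algebra_simps)

lemma fib_closed: "real (fib n) = (gr_alpha ^ n - gr_beta ^ n) / sqrt 5"
  unfolding gr_alpha_def gr_beta_def by (rule fib_closed_form)

lemma lucas_closed: "real (lucas n) = gr_alpha ^ n + gr_beta ^ n"
proof (induction n rule: lucas.induct)
  case 1 thus ?case by simp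
next
  case 2 thus ?case unfolding gr_alpha_def gr_beta_def by (simp add: add_divide_distrib[symmetric])
next
  case (3 n)
  have "real (lucas (Suc (Suc n))) = real (lucas (Suc n)) + real (lucas n)" by simp
  also have "\<dots> = gr_alpha^n * (gr_alpha + 1) + gr_beta^n * (gr_beta + 1)"
    using 3 by (simp add: algebra_simps)
  also have "\<dots> = gr_alpha ^ Suc (Suc n) + gr_beta ^ Suc (Suc n)"
  proof -
    have e: "x ^ Suc (Suc n) = x^n * x^2" for x :: real by (simp add: power2_eq_square algebra_simps)
    show ?thesis unfolding e ab_facts(5,6) ..
  qed
  finally show ?case .
qed

lemma fsplit_alg: "s \<noteq> 0 \<Longrightarrow> s * ((a - b) / s * r * w / D) = r * (a * w) / D - r * (b * w) / (D::real)"
  by (cases "D = 0") (simp_all add: field_simps)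

lemma fterm_split: "sqrt 5 * fterm n z k = gt n (gr_alpha * z) k - gt n (gr_beta * z) k"
  unfolding fterm_def gt_def fib_closed power_mult_distrib by (rule fsplit_alg) simp

lemma lterm_split: "lterm n z k = gt n (gr_alpha * z) k + gt n (gr_beta * z) k"
  unfolding lterm_def gt_def lucas_closed power_mult_distrib by (simp add: add_divide_distrib algebra_simps)

lemma yz_bounds:
  assumes z: "0 < \<bar>z\<bar>" "\<bar>z\<bar> < 1 / gr_alpha"
  shows "0 < \<bar>gr_alpha * z\<bar>" "\<bar>gr_alpha * z\<bar> < 1" "0 < \<bar>gr_beta * z\<bar>" "\<bar>gr_beta * z\<bar> < 1"
proof -
  have a: "gr_alpha > 0" "\<bar>gr_beta\<bar> < gr_alpha" "gr_beta \<noteq> 0" using ab_facts by auto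
  show "0 < \<bar>gr_alpha * z\<bar>" "0 < \<bar>gr_beta * z\<bar>" using a z by (auto simp: abs_mult)
  have "\<bar>gr_alpha * z\<bar> = gr_alpha * \<bar>z\<bar>" using a by (simp add: abs_mult)
  also have "\<dots> < gr_alpha * (1 / gr_alpha)" using a z by (intro mult_strict_left_mono) auto
  finally show "\<bar>gr_alpha * z\<bar> < 1" using a by simp
  have "\<bar>gr_beta * z\<bar> = \<bar>gr_beta\<bar> * \<bar>z\<bar>" by (simp add: abs_mult)
  also have "\<dots> \<le> gr_alpha * \<bar>z\<bar>" using a by (intro mult_right_mono) auto
  finally show "\<bar>gr_beta * z\<bar> < 1" using \<open>\<bar>gr_alpha * z\<bar> < 1\<close> a by (simp add: abs_mult)
qed

lemma part1:
  assumes n: "n \<ge> 1" and z: "0 < \<bar>z\<bar>" "\<bar>z\<bar> < 1 / gr_alpha"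
  shows "((\<lambda>k. sqrt 5 * fterm n z (Suc k)) sums RHS_F n z) \<and> ((\<lambda>k. lterm n z (Suc k)) sums RHS_L n z)"
proof -
  note yb = yz_bounds[OF z]
  have A: "(\<lambda>k. gt n (gr_alpha * z) (Suc k)) sums RG n (gr_alpha * z)" by (rule G_sums[OF n yb(1,2)])
  have B: "(\<lambda>k. gt n (gr_beta * z) (Suc k)) sums RG n (gr_beta * z)" by (rule G_sums[OF n yb(3,4)])
  define a1 where "a1 = pi * (gr_alpha * z) / sin (pi * (gr_alpha * z))"
  define a2 where "a2 = pi * (gr_beta * z) / sin (pi * (gr_beta * z))"
  have a1: "a1 > 0" unfolding a1_def using sin_prod_pos[OF yb(1,2)] by (auto simp: zero_less_divide_iff)
  have a2: "a2 > 0" unfolding a2_def using sin_prod_pos[OF yb(3,4)] by (auto simp: zero_less_divide_iff)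
  have sa: "sin (pi * gr_alpha * z) \<noteq> 0" using a1 unfolding a1_def by (auto simp: mult.assoc)
  have sb: "sin (pi * gr_beta * z) \<noteq> 0" using a2 unfolding a2_def by (auto simp: mult.assoc)
  have z0: "z \<noteq> 0" using z by auto
  have ab: "gr_alpha * gr_beta = -1" "gr_alpha \<noteq> 0" "gr_beta \<noteq> 0" using ab_facts by auto
  have q1: "a1 / a2 = - (gr_alpha ^ 2) * sin (pi * gr_beta * z) / sin (pi * gr_alpha * z)"
  proof -
    have "a1 / a2 = gr_alpha / gr_beta * sin (pi * gr_beta * z) / sin (pi * gr_alpha * z)"
      unfolding a1_def a2_def using sa sb z0 ab pi_gt_zero by (simp add: field_simps mult.assoc)
    moreover have "gr_alpha / gr_beta = - (gr_alpha ^ 2)"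
      using ab by (simp add: field_simps power2_eq_square)
    ultimately show ?thesis by simp
  qed
  have q2: "a1 * a2 = - (pi ^ 2 * z ^ 2) / (sin (pi * gr_alpha * z) * sin (pi * gr_beta * z))"
  proof -
    have "a1 * a2 = (gr_alpha * gr_beta) * (pi ^ 2 * z ^ 2) / (sin (pi * gr_alpha * z) * sin (pi * gr_beta * z))"
      unfolding a1_def a2_def by (simp add: field_simps power2_eq_square mult.assoc)
    thus ?thesis using ab by simp
  qed
  define N where "N = 2 * real n - 1"
  define c :: real where "c = fact (2*n-2)"
  have r1: "RG n (gr_alpha*z) = -1/N^2 + 1/N * ln a1 - c * clsum n (2*pi*gr_alpha*z)"
    unfolding RG_def a1_def N_def c_def by (simp add: mult.assoc)
  have r2: "RG n (gr_beta*z) = -1/N^2 + 1/N * ln a2 - c * clsum n (2*pi*gr_beta*z)"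
    unfolding RG_def a2_def N_def c_def by (simp add: mult.assoc)
  have F: "RG n (gr_alpha * z) - RG n (gr_beta * z) = RHS_F n z"
  proof -
    have "RHS_F n z = 1/N * ln (a1 / a2) - c * clsum n (2*pi*gr_alpha*z) + c * clsum n (2*pi*gr_beta*z)"
      unfolding RHS_F_def q1 N_def c_def ..
    moreover have "ln (a1 / a2) = ln a1 - ln a2" using a1 a2 by (simp add: ln_div)
    ultimately show ?thesis unfolding r1 r2 by (simp add: algebra_simps)
  qed
  have L: "RG n (gr_alpha * z) + RG n (gr_beta * z) = RHS_L n z"
  proof -
    have "RHS_L n z = - 2 / N^2 + 1/N * ln (a1 * a2) - c * clsum n (2*pi*gr_alpha*z) - c * clsum n (2*pi*gr_beta*z)"
      unfolding RHS_L_def q2 N_def c_def ..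
    moreover have "ln (a1 * a2) = ln a1 + ln a2" using a1 a2 by (simp add: ln_mult)
    ultimately show ?thesis unfolding r1 r2 by (simp add: algebra_simps)
  qed
  have "(\<lambda>k. sqrt 5 * fterm n z (Suc k)) sums RHS_F n z"
    unfolding fterm_split F[symmetric] by (rule sums_diff[OF A B])
  moreover have "(\<lambda>k. lterm n z (Suc k)) sums RHS_L n z"
    unfolding lterm_split L[symmetric] by (rule sums_add[OF A B])
  ultimately show ?thesis by simp
qed

lemma fib_le: "real (fib m) \<le> gr_alpha ^ m"
proof -
  have a: "gr_alpha \<ge> 1" "\<bar>gr_beta\<bar> \<le> 1" using ab_facts by auto
  have "\<bar>gr_beta ^ m\<bar> \<le> 1" using a by (simp add: power_abs power_le_one)
  moreover have "1 \<le> gr_alpha ^ m" using a by (simp add: one_le_power)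
  ultimately have "gr_alpha ^ m - gr_beta ^ m \<le> 2 * gr_alpha ^ m" by linarith
  also have "\<dots> \<le> sqrt 5 * gr_alpha ^ m" using sqrt5_bounds a by (intro mult_right_mono) auto
  finally show ?thesis unfolding fib_closed using sqrt5_bounds by (simp add: divide_le_eq mult.commute)
qed

lemma lucas_le: "real (lucas m) \<le> 2 * gr_alpha ^ m"
proof -
  have a: "gr_alpha \<ge> 1" "\<bar>gr_beta\<bar> \<le> 1" using ab_facts by auto
  have "\<bar>gr_beta ^ m\<bar> \<le> 1" using a by (simp add: power_abs power_le_one)
  moreover have "1 \<le> gr_alpha ^ m" using a by (simp add: one_le_power)
  ultimately show ?thesis unfolding lucas_closed by linarith
qed

lemma term_bound:
  assumes n: "n \<ge> 1" and F: "0 \<le> F" "F * \<bar>w\<bar>^(2*Suc k) \<le> C"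
  shows "norm (F * rzeta (real (2*Suc k)) * w^(2*Suc k) / (real (Suc k) * real (2*Suc k - 1 + 2*n))) \<le> 3 * C / real (Suc k)^2"
proof -
  have z: "0 \<le> rzeta (real (2*Suc k))" "rzeta (real (2*Suc k)) \<le> 3" using rzeta_bounds[of "Suc k"] by auto
  have D: "real (Suc k) \<le> real (2*Suc k - 1 + 2*n)" using n by simp
  have C0: "0 \<le> C" using F by (smt (verit) zero_le_mult_iff zero_le_power abs_ge_zero)
  have "norm (F * rzeta (real (2*Suc k)) * w^(2*Suc k) / (real (Suc k) * real (2*Suc k - 1 + 2*n)))
        = (F * \<bar>w\<bar>^(2*Suc k)) * rzeta (real (2*Suc k)) / (real (Suc k) * real (2*Suc k - 1 + 2*n))"
    using F z by (simp add: abs_mult power_abs abs_divide mult_ac del: of_nat_Suc)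
  also have "\<dots> \<le> C * 3 / (real (Suc k) * real (Suc k))"
    using F z D C0 by (intro frac_le mult_mono mult_left_mono) (auto simp del: of_nat_Suc)
  finally show ?thesis by (simp add: power2_eq_square mult.commute)
qed

lemma fterm_bound:
  assumes n: "n \<ge> 1" and w: "\<bar>w\<bar> \<le> 1 / gr_alpha"
  shows "norm (fterm n w (Suc k)) \<le> 3 / real (Suc k)^2" "norm (lterm n w (Suc k)) \<le> 6 / real (Suc k)^2"
proof -
  have a: "gr_alpha > 0" using ab_facts by auto
  have wp: "\<bar>w\<bar>^(2*Suc k) \<le> (1/gr_alpha)^(2*Suc k)" using w by (intro power_mono) auto
  have "real (fib (2*Suc k)) * \<bar>w\<bar>^(2*Suc k) \<le> gr_alpha^(2*Suc k) * (1/gr_alpha)^(2*Suc k)"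
    by (rule mult_mono[OF fib_le wp]) (use a in auto)
  also have "\<dots> = 1" using a by (simp add: power_one_over field_simps)
  finally have "norm (fterm n w (Suc k)) \<le> 3 * 1 / real (Suc k)^2"
    unfolding fterm_def by (intro term_bound n) auto
  thus "norm (fterm n w (Suc k)) \<le> 3 / real (Suc k)^2" by simp
  have "real (lucas (2*Suc k)) * \<bar>w\<bar>^(2*Suc k) \<le> (2 * gr_alpha^(2*Suc k)) * (1/gr_alpha)^(2*Suc k)"
    by (rule mult_mono[OF lucas_le wp]) (use a in auto)
  also have "\<dots> = 2" using a by (simp add: power_one_over field_simps)
  finally have "norm (lterm n w (Suc k)) \<le> 3 * 2 / real (Suc k)^2"
    unfolding lterm_def by (intro term_bound n) auto
  thus "norm (lterm n w (Suc k)) \<le> 6 / real (Suc k)^2" by simp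
qed

lemma summ_c: "summable (\<lambda>k. c / real (Suc k)^2)"
  using summable_mult[OF summ_inv_pow[of "2::nat"], of c] by simp

lemma cont_series:
  assumes n: "n \<ge> 1"
  shows "continuous_on (cball 0 (1/gr_alpha)) (\<lambda>w. \<Sum>k. fterm n w (Suc k))"
    and "continuous_on (cball 0 (1/gr_alpha)) (\<lambda>w. \<Sum>k. lterm n w (Suc k))"
proof -
  have ul: "uniform_limit (cball 0 (1/gr_alpha)) (\<lambda>m w. \<Sum>k<m. fterm n w (Suc k)) (\<lambda>w. \<Sum>k. fterm n w (Suc k)) sequentially"
    by (rule Weierstrass_m_test[OF _ summ_c]) (use fterm_bound(1)[OF n] in auto)
  show "continuous_on (cball 0 (1/gr_alpha)) (\<lambda>w. \<Sum>k. fterm n w (Suc k))"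
    by (rule uniform_limit_theorem[OF _ ul trivial_limit_sequentially])
       (auto intro!: always_eventually continuous_intros simp: fterm_def)
  have ul2: "uniform_limit (cball 0 (1/gr_alpha)) (\<lambda>m w. \<Sum>k<m. lterm n w (Suc k)) (\<lambda>w. \<Sum>k. lterm n w (Suc k)) sequentially"
    by (rule Weierstrass_m_test[OF _ summ_c]) (use fterm_bound(2)[OF n] in auto)
  show "continuous_on (cball 0 (1/gr_alpha)) (\<lambda>w. \<Sum>k. lterm n w (Suc k))"
    by (rule uniform_limit_theorem[OF _ ul2 trivial_limit_sequentially])
       (auto intro!: always_eventually continuous_intros simp: lterm_def)
qed

lemma part2:
  assumes n: "n \<ge> 1" and z: "\<bar>z\<bar> = 1 / gr_alpha"
  shows "summable (\<lambda>k. fterm n z (Suc k)) \<and> summable (\<lambda>k. lterm n z (Suc k)) \<and>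
            (RHS_F n \<longlongrightarrow> sqrt 5 * (\<Sum>k. fterm n z (Suc k)))
               (at z within {w. 0 < \<bar>w\<bar> \<and> \<bar>w\<bar> < 1 / gr_alpha}) \<and>
            (RHS_L n \<longlongrightarrow> (\<Sum>k. lterm n z (Suc k)))
               (at z within {w. 0 < \<bar>w\<bar> \<and> \<bar>w\<bar> < 1 / gr_alpha})"
proof -
  define S where "S = {w. 0 < \<bar>w\<bar> \<and> \<bar>w\<bar> < 1 / gr_alpha}"
  have zc: "z \<in> cball 0 (1/gr_alpha)" using z by simp
  have Ssub: "S \<subseteq> cball 0 (1/gr_alpha)" by (auto simp: S_def)
  have s1: "summable (\<lambda>k. fterm n z (Suc k))"
    by (rule summable_comparison_test'[OF summ_c[of 3]]) (use fterm_bound(1)[OF n] z in auto)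
  have s2: "summable (\<lambda>k. lterm n z (Suc k))"
    by (rule summable_comparison_test'[OF summ_c[of 6]]) (use fterm_bound(2)[OF n] z in auto)
  have c1: "((\<lambda>w. \<Sum>k. fterm n w (Suc k)) \<longlongrightarrow> (\<Sum>k. fterm n z (Suc k))) (at z within S)"
    using cont_series(1)[OF n] zc Ssub unfolding continuous_on_def by (blast intro: tendsto_within_subset)
  have c2: "((\<lambda>w. \<Sum>k. lterm n w (Suc k)) \<longlongrightarrow> (\<Sum>k. lterm n z (Suc k))) (at z within S)"
    using cont_series(2)[OF n] zc Ssub unfolding continuous_on_def by (blast intro: tendsto_within_subset)
  have evS: "\<forall>\<^sub>F w in at z within S. w \<in> S"
    by (simp add: eventually_at_filter)
  have eF: "\<forall>\<^sub>F w in at z within S. sqrt 5 * (\<Sum>k. fterm n w (Suc k)) = RHS_F n w"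
    using evS
  proof eventually_elim
    case (elim w)
    hence w: "0 < \<bar>w\<bar>" "\<bar>w\<bar> < 1 / gr_alpha" by (auto simp: S_def)
    have "(\<lambda>k. sqrt 5 * fterm n w (Suc k)) sums RHS_F n w" using part1[OF n w] by simp
    hence "RHS_F n w = (\<Sum>k. sqrt 5 * fterm n w (Suc k))" by (simp add: sums_iff)
    also have "\<dots> = sqrt 5 * (\<Sum>k. fterm n w (Suc k))"
      by (rule suminf_mult) (rule summable_comparison_test'[OF summ_c[of 3]], use fterm_bound(1)[OF n] w in auto)
    finally show ?case by simp
  qed
  have eL: "\<forall>\<^sub>F w in at z within S. (\<Sum>k. lterm n w (Suc k)) = RHS_L n w"
    using evS
  proof eventually_elim
    case (elim w)
    hence w: "0 < \<bar>w\<bar>" "\<bar>w\<bar> < 1 / gr_alpha" by (auto simp: S_def)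
    have "(\<lambda>k. lterm n w (Suc k)) sums RHS_L n w" using part1[OF n w] by simp
    thus ?case by (simp add: sums_iff)
  qed
  have "(RHS_F n \<longlongrightarrow> sqrt 5 * (\<Sum>k. fterm n z (Suc k))) (at z within S)"
    by (rule Lim_transform_eventually[OF tendsto_mult_left[OF c1] eF])
  moreover have "(RHS_L n \<longlongrightarrow> (\<Sum>k. lterm n z (Suc k))) (at z within S)"
    by (rule Lim_transform_eventually[OF c2 eL])
  ultimately show ?thesis using s1 s2 unfolding S_def by simp
qed

theorem theorem19:
  fixes n :: nat
  assumes "n \<ge> 1"
  shows "(\<forall>z::real. 0 < \<bar>z\<bar> \<and> \<bar>z\<bar> < 1 / gr_alpha \<longrightarrow>
            ((\<lambda>k. sqrt 5 * fterm n z (Suc k)) sums RHS_F n z) \<and>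
            ((\<lambda>k. lterm n z (Suc k)) sums RHS_L n z))
       \<and> (\<forall>z::real. \<bar>z\<bar> = 1 / gr_alpha \<longrightarrow>
            summable (\<lambda>k. fterm n z (Suc k)) \<and> summable (\<lambda>k. lterm n z (Suc k)) \<and>
            (RHS_F n \<longlongrightarrow> sqrt 5 * (\<Sum>k. fterm n z (Suc k)))
               (at z within {w. 0 < \<bar>w\<bar> \<and> \<bar>w\<bar> < 1 / gr_alpha}) \<and>
            (RHS_L n \<longlongrightarrow> (\<Sum>k. lterm n z (Suc k)))
               (at z within {w. 0 < \<bar>w\<bar> \<and> \<bar>w\<bar> < 1 / gr_alpha}))"
  using part1[OF assms] part2[OF assms] by blast

end
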